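(* There is a universal constant $C_{\mathrm{hg}}>1$ such that the following holds. Let $m_1,k,s$ be positive integers and let $T_0,T_1,\dots,T_k$ be independent random subsets of $[m_1]$, where $T_0$ is uniformly distributed among subsets of size $s_0$, and for $j\in[k]$, $T_j$ is uniformly distributed among subsets of size $s_j$ with $1\le s_j\le s$. Let $\bar T_l=\bigcup_{i=0}^l T_i$, $X_l=|\bar T_{l-1}\cap T_l|$ for $l\in[k]$, and $S=\sum_{j=0}^k s_j$. Then for every $t>\max\{6Ss/m_1,1\}$, $$\mathbb{P}\Big\{\sum_{i=1}^kX_i\ge tk\Big\}\le C_{\mathrm{hg}}^k\exp\Big(-\log\Big(\frac{t}{6Ss/m_1}\Big)tk\Big).$$
   Context: $[m]=\{1,\dots,m\}$. *)

theory Defs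
  imports "HOL-Probability.Probability"
begin

definition unif_subset :: "nat \<Rightarrow> nat \<Rightarrow> nat set pmf" where
  "unif_subset m r = pmf_of_set {A. A \<subseteq> {1..m} \<and> card A = r}"

definition indep_unif_subsets :: "nat \<Rightarrow> nat \<Rightarrow> (nat \<Rightarrow> nat) \<Rightarrow> (nat \<Rightarrow> nat set) pmf" where
  "indep_unif_subsets m k sz = Pi_pmf {0..k} {} (\<lambda>j. unif_subset m (sz j))"

definition overlap :: "(nat \<Rightarrow> nat set) \<Rightarrow> nat \<Rightarrow> nat" where
  "overlap T l = card ((\<Union>i<l. T i) \<inter> T l)"

end

theory Submission
  imports Defs
begin

lemma card_supsets:
  assumes "B \<subseteq> {1..m}" "card B = x" "x \<le> r"
  shows "card {A. A \<subseteq> {1..m} \<and> card A = r \<and> B \<subseteq> A} = (m - x) choose (r - x)"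
proof -
  have finB: "finite B" using assms(1) finite_subset by blast
  have eq: "{A. A \<subseteq> {1..m} \<and> card A = r \<and> B \<subseteq> A} = (\<lambda>C. C \<union> B) ` {C. C \<subseteq> {1..m} - B \<and> card C = r - x}"
  proof (rule set_eqI, rule iffI)
    fix A assume "A \<in> {A. A \<subseteq> {1..m} \<and> card A = r \<and> B \<subseteq> A}"
    hence A: "A \<subseteq> {1..m}" "card A = r" "B \<subseteq> A" by auto
    have "card (A - B) = r - x" using A assms finB by (simp add: card_Diff_subset)
    moreover have "A = (A - B) \<union> B" using A by blast
    ultimately show "A \<in> (\<lambda>C. C \<union> B) ` {C. C \<subseteq> {1..m} - B \<and> card C = r - x}"
      using A by blast
  next
    fix A assume "A \<in> (\<lambda>C. C \<union> B) ` {C. C \<subseteq> {1..m} - B \<and> card C = r - x}"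
    then obtain C where C: "C \<subseteq> {1..m} - B" "card C = r - x" "A = C \<union> B" by blast
    have finC: "finite C" using C(1) finite_subset by blast
    have "card (C \<union> B) = card C + card B" using C(1) finC finB by (intro card_Un_disjoint) auto
    thus "A \<in> {A. A \<subseteq> {1..m} \<and> card A = r \<and> B \<subseteq> A}" using C assms by auto
  qed
  have inj: "inj_on (\<lambda>C. C \<union> B) {C. C \<subseteq> {1..m} - B \<and> card C = r - x}"
    by (rule inj_onI) blast
  have "card ({1..m} - B) = m - x" using assms finB by (simp add: card_Diff_subset)
  thus ?thesis unfolding eq using card_image[OF inj] n_subsets[of "{1..m} - B" "r - x"] by simp
qed

lemma choose_ratio:
  "x \<le> r \<Longrightarrow> r \<le> m \<Longrightarrow> real ((m - x) choose (r - x)) \<le> (real r / real m)^x * real (m choose r)"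
proof (induction x arbitrary: m r)
  case 0 then show ?case by simp
next
  case (Suc x)
  have r1: "r \<ge> 1" "m \<ge> 1" using Suc.prems by auto
  have IH: "real ((m - 1 - x) choose (r - 1 - x)) \<le> (real (r-1) / real (m-1))^x * real ((m-1) choose (r-1))"
    using Suc.IH[of "r - 1" "m - 1"] Suc.prems by simp
  have e: "m - Suc x = m - 1 - x" "r - Suc x = r - 1 - x" by auto
  have tb: "real r * real (m choose r) = real m * real ((m-1) choose (r-1))"
    proof -
    have "r * (m choose r) = m * ((m-1) choose (r-1))" using times_binomial_minus1_eq[of r m] r1 by simp
    then have "real (r * (m choose r)) = real (m * ((m-1) choose (r-1)))" by (simp only:)
    then show ?thesis by simp
  qed
  have q: "real (r-1) / real (m-1) \<le> real r / real m"
  proof (cases "m = 1")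
    case True then show ?thesis by simp
  next
    case False
    then have "m > 1" using r1 by simp
    have a1: "real (r-1) = real r - 1" "real (m-1) = real m - 1" using r1 by auto
    have "(real r - 1) * real m \<le> real r * (real m - 1)"
      using Suc.prems by (simp add: algebra_simps)
    then show ?thesis unfolding a1 using \<open>m > 1\<close> by (simp add: divide_simps)
  qed
  have "((real (r-1) / real (m-1))^x) \<le> (real r / real m)^x"
    by (rule power_mono[OF q]) simp
  hence hm: "(real (r-1) / real (m-1))^x * real ((m-1) choose (r-1)) \<le> (real r / real m)^x * real ((m-1) choose (r-1))"
    by (rule mult_right_mono) simp
  have ceq: "real ((m-1) choose (r-1)) = real r / real m * real (m choose r)"
    using tb r1 by (simp add: field_simps)
  have *: "(real (r-1) / real (m-1))^x * real ((m-1) choose (r-1)) \<le> (real r / real m)^x * (real r / real m * real (m choose r))"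
    using hm unfolding ceq[symmetric] .
  have **: "(real r / real m)^x * (real r / real m * real (m choose r)) = (real r / real m)^Suc x * real (m choose r)"
    by (simp only: power_Suc mult_ac)
  show ?case unfolding e using order_trans[OF IH *] unfolding ** .
qed

lemma prob_supset:
  assumes "finite B" "r \<le> m" "m \<ge> 1"
  shows "measure_pmf.prob (unif_subset m r) {y. B \<subseteq> y} \<le> (real r / real m) ^ card B"
proof -
  let ?S = "{A. A \<subseteq> {1..m} \<and> card A = r}"
  have fin: "finite ?S" by (rule finite_subset[of _ "Pow {1..m}"]) auto
  have cS: "card ?S = m choose r" using n_subsets[of "{1..m}" r] by simp
  have ne: "?S \<noteq> {}" using cS assms by (metis card.empty zero_less_binomial_iff not_less_zero neq0_conv)
  have p: "measure_pmf.prob (unif_subset m r) {y. B \<subseteq> y} = card (?S \<inter> {y. B \<subseteq> y}) / card ?S"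
    unfolding unif_subset_def using fin ne by (simp add: measure_pmf_of_set)
  have i: "?S \<inter> {y. B \<subseteq> y} = {A. A \<subseteq> {1..m} \<and> card A = r \<and> B \<subseteq> A}" by blast
  show ?thesis
  proof (cases "B \<subseteq> {1..m} \<and> card B \<le> r")
    case True
    have pos: "real (m choose r) > 0" using assms by simp
    have "real (card (?S \<inter> {y. B \<subseteq> y})) \<le> (real r / real m)^card B * real (m choose r)"
      unfolding i card_supsets[OF conjunct1[OF True] refl conjunct2[OF True]]
      using choose_ratio[of "card B" r m] True assms by simp
    then show ?thesis unfolding p cS using pos assms(3) by (simp add: divide_simps)
  next
    case False
    have "?S \<inter> {y. B \<subseteq> y} = {}"
    proof (rule ccontr)
      assume "?S \<inter> {y. B \<subseteq> y} \<noteq> {}"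
      then obtain A where A: "A \<subseteq> {1..m}" "card A = r" "B \<subseteq> A" by blast
      have "card B \<le> card A" using A by (intro card_mono) (auto intro: finite_subset)
      then show False using A False by auto
    qed
    then show ?thesis unfolding p by simp
  qed
qed

lemma hyper:
  assumes "finite U" "r \<le> m" "m \<ge> 1"
  shows "measure_pmf.prob (unif_subset m r) {y. x \<le> card (U \<inter> y)}
         \<le> (real (card U) * real r / real m)^x / fact x"
proof -
  let ?I = "{B. B \<subseteq> U \<and> card B = x}"
  have finI: "finite ?I" by (rule finite_subset[of _ "Pow U"]) (use assms in auto)
  have sub: "{y. x \<le> card (U \<inter> y)} \<subseteq> (\<Union>B\<in>?I. {y. B \<subseteq> y})"
  proof
    fix y assume "y \<in> {y. x \<le> card (U \<inter> y)}"
    then obtain B where "B \<subseteq> U \<inter> y" "card B = x" by (auto elim: obtain_subset_with_card_n)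
    then show "y \<in> (\<Union>B\<in>?I. {y. B \<subseteq> y})" by blast
  qed
  have "measure_pmf.prob (unif_subset m r) {y. x \<le> card (U \<inter> y)}
        \<le> measure_pmf.prob (unif_subset m r) (\<Union>B\<in>?I. {y. B \<subseteq> y})"
    by (rule measure_pmf.finite_measure_mono[OF sub]) simp
  also have "\<dots> \<le> (\<Sum>B\<in>?I. measure_pmf.prob (unif_subset m r) {y. B \<subseteq> y})"
    by (rule measure_pmf.finite_measure_subadditive_finite[OF finI]) simp
  also have "\<dots> \<le> (\<Sum>B\<in>?I. (real r / real m) ^ x)"
  proof (rule sum_mono)
    fix B assume "B \<in> ?I"
    then have "finite B" "card B = x" using assms(1) finite_subset by auto
    then show "measure_pmf.prob (unif_subset m r) {y. B \<subseteq> y} \<le> (real r / real m) ^ x"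
      using prob_supset[of B r m] assms by simp
  qed
  also have "\<dots> = real (card U choose x) * (real r / real m) ^ x"
    using n_subsets[OF assms(1), of x] by simp
  also have "\<dots> \<le> (real (card U) ^ x / fact x) * (real r / real m) ^ x"
  proof (rule mult_right_mono)
    have "real (card U choose x) * fact x \<le> real (card U) ^ x"
      using binomial_fact_pow[of "card U" x] by (metis of_nat_fact of_nat_le_iff of_nat_mult of_nat_power)
    then show "real (card U choose x) \<le> real (card U) ^ x / fact x" by (simp add: field_simps)
  qed simp
  also have "\<dots> = (real (card U) * real r / real m)^x / fact x"
    by (simp add: power_mult_distrib power_divide)
  finally show ?thesis .
qed


lemma set_unif:
  assumes "r \<le> m"
  shows "set_pmf (unif_subset m r) = {A. A \<subseteq> {1..m} \<and> card A = r}"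
proof -
  let ?S = "{A. A \<subseteq> {1..m} \<and> card A = r}"
  have fin: "finite ?S" by (rule finite_subset[of _ "Pow {1..m}"]) auto
  have cS: "card ?S = m choose r" using n_subsets[of "{1..m}" r] by simp
  have ne: "?S \<noteq> {}" using cS assms by (metis card.empty zero_less_binomial_iff neq0_conv)
  show ?thesis unfolding unif_subset_def using fin ne by simp
qed

lemma support:
  assumes "f \<in> set_pmf (indep_unif_subsets m k sz)" "i \<le> k" "sz i \<le> m"
  shows "f i \<subseteq> {1..m} \<and> card (f i) = sz i"
proof -
  have "f \<in> PiE_dflt {0..k} {} (set_pmf \<circ> (\<lambda>j. unif_subset m (sz j)))"
    using assms(1) unfolding indep_unif_subsets_def by (simp add: set_Pi_pmf)
  then have "f i \<in> set_pmf (unif_subset m (sz i))" using assms(2) by (auto simp: PiE_dflt_def)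
  then show ?thesis using set_unif[OF assms(3)] by auto
qed

lemma Pi_step:
  "indep_unif_subsets m (Suc k) sz =
   bind_pmf (indep_unif_subsets m k sz) (\<lambda>f. map_pmf (\<lambda>y. f(Suc k := y)) (unif_subset m (sz (Suc k))))"
proof -
  have e: "{0..Suc k} = insert (Suc k) {0..k}" by auto
  show ?thesis
    unfolding indep_unif_subsets_def e
    by (subst Pi_pmf_insert') (auto simp: map_pmf_def intro: bind_commute_pmf)
qed

lemma prob_bind:
  "measure_pmf.prob (bind_pmf M g) E = measure_pmf.expectation M (\<lambda>x. measure_pmf.prob (g x) E)"
  unfolding measure_pmf_bind
  by (rule measure_pmf.measure_bind[where N="count_space UNIV"]) (auto simp: measurable_measure_pmf intro: measurable_space[OF measurable_measure_pmf[of g], simplified])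

lemma sum_upd:
  "(\<Sum>i=1..Suc k. overlap (f(Suc k:=y)) i) = (\<Sum>i=1..k. overlap f i) + card ((\<Union>i\<le>k. f i) \<inter> y)"
proof -
  have "(\<Sum>i=1..k. overlap (f(Suc k:=y)) i) = (\<Sum>i=1..k. overlap f i)"
  proof (rule sum.cong[OF refl])
    fix i assume "i \<in> {1..k}"
    then have "(\<Union>j<i. (f(Suc k := y)) j) = (\<Union>j<i. f j)" "(f(Suc k := y)) i = f i" by auto
    then show "overlap (f(Suc k:=y)) i = overlap f i" unfolding overlap_def by simp
  qed
  moreover have "overlap (f(Suc k:=y)) (Suc k) = card ((\<Union>i\<le>k. f i) \<inter> y)"
  proof -
    have "(\<Union>j<Suc k. (f(Suc k := y)) j) = (\<Union>i\<le>k. f i)" by (auto simp: less_Suc_eq_le)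
    then show ?thesis unfolding overlap_def by simp
  qed
  ultimately show ?thesis by simp
qed


lemma binom_sum:
  fixes a b :: real
  shows "(\<Sum>x\<le>n. a^x / fact x * (b^(n-x) / fact (n-x))) = (a + b)^n / fact n"
proof -
  have "(a + b)^n / fact n = (\<Sum>x\<le>n. real (n choose x) * a^x * b^(n-x)) / fact n"
    by (simp add: binomial_ring)
  also have "\<dots> = (\<Sum>x\<le>n. real (n choose x) * a^x * b^(n-x) / fact n)"
    by (simp add: sum_divide_distrib)
  also have "\<dots> = (\<Sum>x\<le>n. a^x / fact x * (b^(n-x) / fact (n-x)))"
  proof (rule sum.cong[OF refl])
    fix x assume "x \<in> {..n}"
    then have "real (n choose x) = fact n / (fact x * fact (n - x))" by (simp add: binomial_fact)
    then show "real (n choose x) * a^x * b^(n-x) / fact n = a^x / fact x * (b^(n-x) / fact (n-x))"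
      by (simp add: field_simps)
  qed
  finally show ?thesis by simp
qed

lemma main:
  assumes m1: "m \<ge> 1" and a0: "a \<ge> 0"
  shows "sz 0 \<le> m \<Longrightarrow> (\<forall>j\<in>{1..k}. sz j \<le> s \<and> sz j \<le> m) \<Longrightarrow>
         real (\<Sum>j=0..k. sz j) * real s \<le> a * real m \<Longrightarrow>
         measure_pmf.prob (indep_unif_subsets m k sz) {T. n \<le> (\<Sum>i=1..k. overlap T i)}
           \<le> (real k * a)^n / fact n"
proof (induction k arbitrary: n)
  case 0
  then show ?case
  proof (cases "n = 0")
    case True then show ?thesis by simp
  next
    case False then show ?thesis by simp
  qed
next
  case (Suc k)
  let ?M = "indep_unif_subsets m k sz"
  let ?U = "unif_subset m (sz (Suc k))"
  let ?E = "{T. n \<le> (\<Sum>i=1..Suc k. overlap T i)}"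
  define Y where "Y f = (\<Sum>i=1..k. overlap f i)" for f
  define W where "W f = (\<Union>i\<le>k. f i)" for f :: "nat \<Rightarrow> nat set"
  define g where "g f = (\<Sum>x\<le>n. (if n - x \<le> Y f then a^x / fact x else 0))" for f
  have Sk: "real (\<Sum>j=0..k. sz j) * real s \<le> a * real m"
  proof -
    have "(\<Sum>j=0..k. sz j) \<le> (\<Sum>j=0..Suc k. sz j)" by simp
    then have "real (\<Sum>j=0..k. sz j) * real s \<le> real (\<Sum>j=0..Suc k. sz j) * real s"
      by (intro mult_right_mono) auto
    then show ?thesis using Suc.prems(3) by linarith
  qed
  have IH: "measure_pmf.prob ?M {T. n' \<le> Y T} \<le> (real k * a)^n' / fact n'" for n'
    unfolding Y_def using Suc.IH[of n'] Suc.prems Sk by auto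
  have rs: "sz (Suc k) \<le> s" "sz (Suc k) \<le> m" using Suc.prems(2) by auto
  have pt: "measure_pmf.prob ?U {y. f(Suc k := y) \<in> ?E} \<le> g f" if f: "f \<in> set_pmf ?M" for f
  proof -
    have sp: "f i \<subseteq> {1..m} \<and> card (f i) = sz i" if "i \<le> k" for i
      using support[OF f that] that Suc.prems(1,2) by (cases i) auto
    have finW: "finite (W f)" unfolding W_def using sp by (auto intro: finite_subset)
    have "card (W f) \<le> (\<Sum>i\<le>k. card (f i))" unfolding W_def by (rule card_UN_le) simp
    also have "\<dots> = (\<Sum>j=0..k. sz j)" using sp by (simp add: atMost_atLeast0)
    finally have cW: "card (W f) \<le> (\<Sum>j=0..k. sz j)" .
    have ba: "real (card (W f)) * real (sz (Suc k)) / real m \<le> a"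
    proof -
      have "real (card (W f)) * real (sz (Suc k)) \<le> real (\<Sum>j=0..k. sz j) * real s"
      proof (rule mult_mono)
        show "real (card (W f)) \<le> real (\<Sum>j=0..k. sz j)" using cW by (simp only: of_nat_le_iff)
      qed (use rs in \<open>auto intro: sum_nonneg\<close>)
      then show ?thesis using Sk m1 by (simp add: divide_simps)
    qed
    have hx: "measure_pmf.prob ?U {y. x \<le> card (W f \<inter> y)} \<le> a^x / fact x" for x
    proof -
      have "measure_pmf.prob ?U {y. x \<le> card (W f \<inter> y)} \<le> (real (card (W f)) * real (sz (Suc k)) / real m)^x / fact x"
        by (rule hyper[OF finW rs(2) m1])
      also have "\<dots> \<le> a^x / fact x"
        by (intro divide_right_mono power_mono ba) auto
      finally show ?thesis .
    qed
    have ev: "{y. f(Suc k := y) \<in> ?E} = {y. n \<le> Y f + card (W f \<inter> y)}"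
      unfolding Y_def W_def using sum_upd[where k=k and f=f] by simp
    have gnn: "\<And>x. x \<in> {..n} \<Longrightarrow> 0 \<le> (if n - x \<le> Y f then a^x / fact x else 0)"
      using a0 by auto
    show ?thesis
    proof (cases "n \<le> Y f")
      case True
      have "measure_pmf.prob ?U {y. f(Suc k := y) \<in> ?E} \<le> 1" by simp
      also have "1 = (if n - 0 \<le> Y f then a^0 / fact 0 else 0)" using True by simp
      also have "\<dots> \<le> g f" unfolding g_def by (rule member_le_sum[OF _ gnn]) auto
      finally show ?thesis .
    next
      case False
      have "measure_pmf.prob ?U {y. f(Suc k := y) \<in> ?E} \<le> measure_pmf.prob ?U {y. n - Y f \<le> card (W f \<inter> y)}"
        unfolding ev by (rule measure_pmf.finite_measure_mono) auto
      also have "\<dots> \<le> a^(n - Y f) / fact (n - Y f)" by (rule hx)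
      also have "\<dots> = (if n - (n - Y f) \<le> Y f then a^(n - Y f) / fact (n - Y f) else 0)" using False by simp
      also have "\<dots> \<le> g f" unfolding g_def by (rule member_le_sum[OF _ gnn]) auto
      finally show ?thesis .
    qed
  qed
  have gb: "\<bar>g f\<bar> \<le> (\<Sum>x\<le>n. a^x / fact x)" for f
    unfolding g_def using a0 by (intro order_trans[OF sum_abs] sum_mono) auto
  have intg: "integrable ?M g"
    by (rule measure_pmf.integrable_const_bound[where B="\<Sum>x\<le>n. a^x / fact x"]) (use gb in auto)
  have "measure_pmf.prob (indep_unif_subsets m (Suc k) sz) ?E
        = measure_pmf.expectation ?M (\<lambda>f. measure_pmf.prob (map_pmf (\<lambda>y. f(Suc k := y)) ?U) ?E)"
    unfolding Pi_step by (rule prob_bind)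
  also have "\<dots> = measure_pmf.expectation ?M (\<lambda>f. measure_pmf.prob ?U {y. f(Suc k := y) \<in> ?E})"
    by (simp add: vimage_def)
  also have "\<dots> \<le> measure_pmf.expectation ?M g"
  proof (rule integral_mono_AE)
    show "integrable ?M (\<lambda>f. measure_pmf.prob ?U {y. f(Suc k := y) \<in> ?E})"
      by (rule measure_pmf.integrable_const_bound[where B=1]) auto
    show "integrable ?M g" by (rule intg)
    show "AE f in ?M. measure_pmf.prob ?U {y. f(Suc k := y) \<in> ?E} \<le> g f"
      using pt by (simp add: AE_measure_pmf_iff)
  qed
  also have "measure_pmf.expectation ?M g = (\<Sum>x\<le>n. a^x / fact x * measure_pmf.prob ?M {T. n - x \<le> Y T})"
  proof -
    have "measure_pmf.expectation ?M g = (\<Sum>x\<le>n. measure_pmf.expectation ?M (\<lambda>f. (if n - x \<le> Y f then a^x / fact x else 0)))"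
      unfolding g_def
    proof (rule Bochner_Integration.integral_sum[where f="\<lambda>x f. if n - x \<le> Y f then a^x / fact x else 0"])
      fix x show "integrable ?M (\<lambda>f. if n - x \<le> Y f then a^x / fact x else 0)"
        by (rule measure_pmf.integrable_const_bound[where B="a^x / fact x"]) (use a0 in auto)
    qed
    also have "\<dots> = (\<Sum>x\<le>n. a^x / fact x * measure_pmf.prob ?M {T. n - x \<le> Y T})"
    proof (rule sum.cong[OF refl])
      fix x
      have "(\<lambda>f. (if n - x \<le> Y f then a^x / fact x else 0)) = (\<lambda>f. a^x / fact x * indicator {T. n - x \<le> Y T} f)"
        by (auto simp: indicator_def)
      then show "measure_pmf.expectation ?M (\<lambda>f. (if n - x \<le> Y f then a^x / fact x else 0)) = a^x / fact x * measure_pmf.prob ?M {T. n - x \<le> Y T}"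
        by simp
    qed
    finally show ?thesis .
  qed
  also have "\<dots> \<le> (\<Sum>x\<le>n. a^x / fact x * ((real k * a)^(n-x) / fact (n-x)))"
    by (intro sum_mono mult_left_mono IH) (use a0 in auto)
  also have "\<dots> = (a + real k * a)^n / fact n" by (rule binom_sum)
  also have "\<dots> = (real (Suc k) * a)^n / fact n" by (simp add: algebra_simps)
  finally show ?case .
qed


lemma pow_fact_le_exp:
  fixes x :: real assumes "x \<ge> 0"
  shows "x^n / fact n \<le> exp x"
proof -
  have "(\<lambda>j. x^j /\<^sub>R fact j) sums exp x" by (rule exp_converges)
  then have sm: "summable (\<lambda>j. x^j / fact j)" and ex: "exp x = (\<Sum>j. x^j / fact j)"
    by (auto simp: sums_iff divide_inverse mult.commute)
  have "sum (\<lambda>j. x^j / fact j) {n} \<le> (\<Sum>j. x^j / fact j)"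
    by (rule sum_le_suminf[OF sm]) (use assms in auto)
  then show ?thesis using ex by simp
qed

lemma final_arith:
  fixes a t :: real and k n :: nat
  assumes a: "a > 0" and q: "t > 6 * a" and t1: "t > 1" and k: "k \<ge> 1" and n: "real n \<ge> t * real k"
  shows "(real k * a)^n / fact n \<le> 2 ^ k * exp (- ln (t / (6 * a)) * t * real k)"
proof -
  have tk: "t * real k > 0" using t1 k by simp
  have npos: "real n > 0" using n tk by linarith
  have "(real k * a)^n / fact n = (real k * a)^n / real n ^ n * (real n ^ n / fact n)"
    using npos by (simp add: field_simps)
  also have "\<dots> \<le> (real k * a)^n / real n ^ n * exp (real n)"
    by (intro mult_left_mono pow_fact_le_exp) (use a in auto)
  also have "\<dots> = (exp 1 * real k * a / real n)^n"
    by (simp add: power_divide power_mult_distrib exp_of_nat_mult[symmetric] field_simps)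
  also have "\<dots> \<le> (exp 1 * a / t)^n"
  proof (rule power_mono)
    have "real k / real n \<le> 1 / t" using n t1 npos by (simp add: divide_simps mult.commute)
    then have "exp 1 * a * (real k / real n) \<le> exp 1 * a * (1 / t)" using a by (intro mult_left_mono) auto
    then show "exp 1 * real k * a / real n \<le> exp 1 * a / t" by (simp add: field_simps)
  qed (use a npos in auto)
  also have "\<dots> = (exp 1 * a / t) powr real n" using a t1 by (simp add: powr_realpow)
  also have "\<dots> \<le> (exp 1 * a / t) powr (t * real k)"
  proof (rule powr_mono'[OF n])
    show "0 \<le> exp 1 * a / t" using a t1 by simp
    have "exp 1 * a \<le> 3 * a" using exp_le a by (intro mult_right_mono) auto
    then have "exp 1 * a \<le> t" using q a by linarith
    then show "exp 1 * a / t \<le> 1" using t1 by (simp add: divide_simps)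
  qed
  also have "(exp 1 * a / t) = (exp 1 / 6) * (6 * a / t)" by (simp add: field_simps)
  also have "((exp 1 / 6) * (6 * a / t)) powr (t * real k) = (exp 1 / 6) powr (t * real k) * (6 * a / t) powr (t * real k)"
    by (rule powr_mult)
  also have "\<dots> \<le> 1 * (6 * a / t) powr (t * real k)"
    by (intro mult_right_mono powr_le1) (use tk exp_le in auto)
  also have "(6 * a / t) powr (t * real k) = exp (- ln (t / (6 * a)) * t * real k)"
  proof -
    have "ln (6 * a / t) = - ln (t / (6 * a))" using a t1 by (simp add: ln_div)
    then show ?thesis using a t1 by (simp add: powr_def mult_ac)
  qed
  also have "1 * exp (- ln (t / (6 * a)) * t * real k) \<le> 2 ^ k * exp (- ln (t / (6 * a)) * t * real k)"
    by (intro mult_right_mono) auto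
  finally show ?thesis .
qed


theorem proposition4p8:
  "\<exists>C::real. C > 1 \<and>
    (\<forall>(m1::nat) (k::nat) (s::nat) (sz::nat \<Rightarrow> nat) (t::real).
       m1 \<ge> 1 \<longrightarrow> k \<ge> 1 \<longrightarrow> s \<ge> 1 \<longrightarrow>
       sz 0 \<le> m1 \<longrightarrow>
       (\<forall>j\<in>{1..k}. 1 \<le> sz j \<and> sz j \<le> s \<and> sz j \<le> m1) \<longrightarrow>
       (let S = real (\<Sum>j=0..k. sz j) in
        t > max (6 * S * real s / real m1) 1 \<longrightarrow>
        measure_pmf.prob (indep_unif_subsets m1 k sz)
          {T. real (\<Sum>i=1..k. overlap T i) \<ge> t * real k}
        \<le> C ^ k * exp (- ln (t / (6 * S * real s / real m1)) * t * real k)))"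
proof (rule exI[of _ 2], intro conjI allI impI)
  fix m1 k s :: nat and sz :: "nat \<Rightarrow> nat" and t :: real
  assume m1: "m1 \<ge> 1" and k: "k \<ge> 1" and s: "s \<ge> 1" and sz0: "sz 0 \<le> m1"
    and szj: "\<forall>j\<in>{1..k}. 1 \<le> sz j \<and> sz j \<le> s \<and> sz j \<le> m1"
  define S where "S = real (\<Sum>j=0..k. sz j)"
  define a where "a = S * real s / real m1"
  have e6: "6 * S * real s / real m1 = 6 * a" unfolding a_def by simp
  have S1: "S \<ge> 1"
  proof -
    have "sz 1 \<le> (\<Sum>j=0..k. sz j)" using k by (intro member_le_sum) auto
    moreover have "1 \<le> sz 1" using szj k by auto
    ultimately have "1 \<le> (\<Sum>j=0..k. sz j)" by linarith
    then have "real 1 \<le> real (\<Sum>j=0..k. sz j)" by (simp only: of_nat_le_iff)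
    then show ?thesis unfolding S_def by (simp only: of_nat_1)
  qed
  have apos: "a > 0" unfolding a_def using S1 s m1 by simp
  show "let S = real (\<Sum>j=0..k. sz j) in
        t > max (6 * S * real s / real m1) 1 \<longrightarrow>
        measure_pmf.prob (indep_unif_subsets m1 k sz)
          {T. real (\<Sum>i=1..k. overlap T i) \<ge> t * real k}
        \<le> 2 ^ k * exp (- ln (t / (6 * S * real s / real m1)) * t * real k)"
    unfolding Let_def S_def[symmetric] e6
  proof
    assume "t > max (6 * a) 1"
    then have q: "t > 6 * a" and t1: "t > 1" by auto
    define n where "n = nat \<lceil>t * real k\<rceil>"
    have tk0: "t * real k > 0" using t1 k by simp
    have nge: "real n \<ge> t * real k"
    proof -
      have "\<lceil>t * real k\<rceil> \<ge> 0" using tk0 by simp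
      then have "real (nat \<lceil>t * real k\<rceil>) = real_of_int \<lceil>t * real k\<rceil>" by simp
      then show ?thesis using le_of_int_ceiling[of "t * real k"] unfolding n_def by simp
    qed
    have ev: "{T. real (\<Sum>i=1..k. overlap T i) \<ge> t * real k} = {T. n \<le> (\<Sum>i=1..k. overlap T i)}"
    proof (rule Collect_cong)
      fix T
      show "(real (\<Sum>i=1..k. overlap T i) \<ge> t * real k) = (n \<le> (\<Sum>i=1..k. overlap T i))"
        unfolding n_def by (simp add: nat_le_iff ceiling_le_iff)
    qed
    have "measure_pmf.prob (indep_unif_subsets m1 k sz) {T. n \<le> (\<Sum>i=1..k. overlap T i)} \<le> (real k * a)^n / fact n"
    proof (rule main[where sz=sz and k=k and s=s and m=m1 and a=a and n=n, OF m1 less_imp_le[OF apos] sz0])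
      show "\<forall>j\<in>{1..k}. sz j \<le> s \<and> sz j \<le> m1" using szj by auto
      show "real (\<Sum>j=0..k. sz j) * real s \<le> a * real m1" unfolding a_def S_def using m1 by simp
    qed
    also have "\<dots> \<le> 2 ^ k * exp (- ln (t / (6 * a)) * t * real k)"
      by (rule final_arith[OF apos q t1 k nge])
    finally show "measure_pmf.prob (indep_unif_subsets m1 k sz) {T. real (\<Sum>i=1..k. overlap T i) \<ge> t * real k}
        \<le> 2 ^ k * exp (- ln (t / (6 * a)) * t * real k)" unfolding ev .
  qed
qed simp

end
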